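(* For $0\le x\le 1$ let $\Lambda_x$ be the qutrit channel on $3\times 3$ complex matrices defined by $$\Lambda_x(\rho)=(1-x)\rho+\frac{x}{2}\big(\operatorname{Tr}(\rho)I_3-\rho^{T}\big),$$ where $\rho^T$ is the transpose of $\rho$. Then its one-shot classical (Holevo) capacity is $$\chi^*(\Lambda_x)=\log_2 3+\frac{x}{2}\log_2\frac{x}{2}+\Big(1-\frac{x}{2}\Big)\log_2\Big(1-\frac{x}{2}\Big).$$ Equivalently, the minimum output entropy is $\min_\rho S(\Lambda_x(\rho))=-\frac{x}{2}\log_2\frac{x}{2}-(1-\frac{x}{2})\log_2(1-\frac{x}{2})$, where the minimum is over density matrices $\rho$ on $\mathbb{C}^3$, and it is attained at the pure state $\frac{1}{\sqrt 2}(i,1,0)^T$.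
   Context: For a quantum channel $\Phi$, $\chi^*(\Phi)=\max_{\{p_i,\rho_i\}}\big[S\big(\sum_i p_i\Phi(\rho_i)\big)-\sum_i p_i S(\Phi(\rho_i))\big]$, the maximum being over finite ensembles of probabilities $p_i$ and input density matrices $\rho_i$; $S(\rho)=-\operatorname{Tr}(\rho\log_2\rho)$ is the von Neumann entropy, with the convention $0\log 0=0$. *)

theory Defs
  imports "HOL-Analysis.Analysis"
begin

type_synonym cmat3 = "complex^3^3"

definition cadj :: "complex^'n^'m \<Rightarrow> complex^'m^'n" where
  "cadj A = (\<chi> i j. cnj (A $ j $ i))"

definition unitary_mat :: "complex^'n^'n \<Rightarrow> bool" where
  "unitary_mat U \<longleftrightarrow> cadj U ** U = mat 1 \<and> U ** cadj U = mat 1"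

definition psd :: "complex^'n^'n \<Rightarrow> bool" where
  "psd A \<longleftrightarrow> cadj A = A \<and>
     (\<forall>v::complex^'n. Re (\<Sum>i\<in>UNIV. cnj (v $ i) * (A *v v) $ i) \<ge> 0)"

definition density :: "complex^'n^'n \<Rightarrow> bool" where
  "density A \<longleftrightarrow> psd A \<and> trace A = 1"

definition diag_mat :: "real^'n \<Rightarrow> complex^'n^'n" where
  "diag_mat l = (\<chi> i j. if i = j then complex_of_real (l $ i) else 0)"

definition eta :: "real \<Rightarrow> real" where
  "eta t = (if t = 0 then 0 else t * log 2 t)"

text \<open>Von Neumann entropy S(A) = - sum over eigenvalues l of l log2 l, the eigenvalues
  (with multiplicity) being read off a spectral decomposition A = U diag(l) U^*.
  The sum does not depend on the chosen decomposition.\<close>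
definition vn_entropy :: "complex^'n^'n \<Rightarrow> real" where
  "vn_entropy A = (SOME s. \<exists>U (l::real^'n). unitary_mat U \<and> A = U ** diag_mat l ** cadj U \<and>
                      s = - (\<Sum>i\<in>UNIV. eta (l $ i)))"

definition holevo_quantities :: "(complex^'n^'n \<Rightarrow> complex^'m^'m) \<Rightarrow> real set" where
  "holevo_quantities \<Phi> = {vn_entropy (\<Sum>i<n. p i *\<^sub>R \<Phi> (\<rho> i)) 
        - (\<Sum>i<n. p i * vn_entropy (\<Phi> (\<rho> i))) | (n::nat) p \<rho>.
      (\<forall>i<n. p i \<ge> 0 \<and> density (\<rho> i)) \<and> (\<Sum>i<n. p i) = 1}"

definition Lambda :: "real \<Rightarrow> cmat3 \<Rightarrow> cmat3" where
  "Lambda x \<rho> = (1 - x) *\<^sub>R \<rho> + (x / 2) *\<^sub>R (mat (trace \<rho>) - transpose \<rho>)"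

definition proj :: "complex^'n \<Rightarrow> complex^'n^'n" where
  "proj v = (\<chi> i j. v $ i * cnj (v $ j))"

definition is_max :: "real set \<Rightarrow> real \<Rightarrow> bool" where
  "is_max S v \<longleftrightarrow> v \<in> S \<and> (\<forall>y\<in>S. y \<le> v)"

definition is_min :: "real set \<Rightarrow> real \<Rightarrow> bool" where
  "is_min S v \<longleftrightarrow> v \<in> S \<and> (\<forall>y\<in>S. v \<le> y)"

end

theory Submission
  imports Defs
begin

definition cinner :: "complex^'n \<Rightarrow> complex^'n \<Rightarrow> complex" where
  "cinner u w = (\<Sum>i\<in>UNIV. cnj (u$i) * w$i)"

definition ucol :: "complex^'n^'m \<Rightarrow> 'n \<Rightarrow> complex^'m" where
  "ucol U k = (\<chi> i. U$i$k)"

lemma cinner_add_right: "cinner u (v + w) = cinner u v + cinner u w"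
  by (simp add: cinner_def distrib_left sum.distrib)
lemma cinner_add_left: "cinner (u + v) w = cinner u w + cinner v w"
  by (simp add: cinner_def distrib_right sum.distrib)
lemma cinner_diff_right: "cinner u (v - w) = cinner u v - cinner u w"
  by (simp add: cinner_def right_diff_distrib sum_subtractf)
lemma cinner_diff_left: "cinner (u - v) w = cinner u w - cinner v w"
  by (simp add: cinner_def left_diff_distrib sum_subtractf)
lemma cinner_smult_right: "cinner u (c *s w) = c * cinner u w"
  by (simp add: cinner_def sum_distrib_left mult.left_commute)
lemma cinner_smult_left: "cinner (c *s u) w = cnj c * cinner u w"
  by (simp add: cinner_def sum_distrib_left mult.assoc)
lemma cinner_cnj: "cnj (cinner u w) = cinner w u"
  by (simp add: cinner_def mult.commute)
lemma cinner_zero_right[simp]: "cinner u 0 = 0"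
  by (simp add: cinner_def)
lemma cinner_zero_left[simp]: "cinner 0 u = 0"
  by (simp add: cinner_def)

lemma cnj_sq: "cnj z * z = complex_of_real ((cmod z)^2)"
  using complex_norm_square[of z] by (simp add: mult.commute)

lemma norm_sq_vec: "(norm (v::complex^'n))^2 = (\<Sum>i\<in>UNIV. (cmod (v$i))^2)"
  by (simp add: norm_vec_def L2_set_def sum_nonneg)

lemma cinner_self: "cinner v v = of_real ((norm v)^2)"
proof -
  have "cinner v v = (\<Sum>i\<in>UNIV. of_real ((cmod (v$i))^2))"
    unfolding cinner_def by (rule sum.cong) (auto simp: cnj_sq)
  also have "\<dots> = of_real ((norm v)^2)" by (simp add: norm_sq_vec)
  finally show ?thesis .
qed

lemma cinner_self_eq0: "cinner v v = 0 \<longleftrightarrow> v = 0"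
  by (simp add: cinner_self)

lemma cinner_adj: "cinner u (A *v w) = cinner (cadj A *v u) w"
proof -
  have "cinner u (A *v w) = (\<Sum>i\<in>UNIV. \<Sum>j\<in>UNIV. cnj (u$i) * A$i$j * w$j)"
    by (simp add: cinner_def matrix_vector_mult_def sum_distrib_left mult.assoc)
  also have "\<dots> = (\<Sum>j\<in>UNIV. \<Sum>i\<in>UNIV. cnj (u$i) * A$i$j * w$j)"
    by (rule sum.swap)
  also have "\<dots> = cinner (cadj A *v u) w"
    by (simp add: cinner_def matrix_vector_mult_def cadj_def sum_distrib_right sum_distrib_left mult.commute mult.left_commute)
  finally show ?thesis .
qed

lemma cadj_cadj[simp]: "cadj (cadj A) = A"
  by (simp add: cadj_def vec_eq_iff)

lemma cadj_mult: "cadj (A ** B) = cadj B ** cadj A"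
  by (simp add: cadj_def matrix_matrix_mult_def vec_eq_iff mult.commute)

lemma cadj_add: "cadj (A + B) = cadj A + cadj B"
  by (simp add: cadj_def vec_eq_iff)

lemma cadj_scaleR: "cadj (c *\<^sub>R A) = c *\<^sub>R cadj A"
  by (simp add: cadj_def vec_eq_iff)

lemma cadj_mat: "cadj (mat c :: complex^'n^'n) = mat (cnj c)"
  by (auto simp: cadj_def vec_eq_iff mat_def)

lemma cadj_transpose: "cadj (transpose A) = transpose (cadj A)"
  by (simp add: cadj_def vec_eq_iff transpose_def)

lemma herm_cinner: assumes "cadj A = A" shows "cinner u (A *v w) = cinner (A *v u) w"
  using cinner_adj[of u A w] assms by simp

lemma herm_real: "cadj A = A \<Longrightarrow> Im (cinner u (A *v u)) = 0"
proof -
  assume h: "cadj A = A"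
  have "cnj (cinner u (A *v u)) = cinner u (A *v u)"
    by (simp add: cinner_cnj herm_cinner[OF h])
  then show ?thesis by (metis Reals_cnj_iff complex_is_Real_iff)
qed

lemma mv_smult: "A *v (c *s v) = c *s (A *v (v::complex^'n))"
  by (simp add: matrix_vector_mult_def vec_eq_iff sum_distrib_left mult.left_commute)

lemma ucol_mult: "ucol (A ** B) k = A *v ucol B k"
  by (simp add: ucol_def matrix_vector_mult_def matrix_matrix_mult_def vec_eq_iff)

lemma cinner_ucol: "cinner (ucol U j) (ucol U k) = (cadj U ** U)$j$k"
  by (simp add: cinner_def ucol_def cadj_def matrix_matrix_mult_def)

lemma diag_right: "(U ** diag_mat l)$i$k = U$i$k * of_real (l$k)"
proof -
  have "(U ** diag_mat l)$i$k = (\<Sum>j\<in>UNIV. U$i$j * (if j = k then complex_of_real (l$j) else 0))"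
    by (simp add: matrix_matrix_mult_def diag_mat_def)
  also have "\<dots> = U$i$k * of_real (l$k)"
    by (simp add: if_distrib cong: if_cong)
  finally show ?thesis .
qed

lemma decomp_eig:
  assumes u: "unitary_mat U" and A: "A = U ** diag_mat l ** cadj U"
  shows "A *v ucol U k = of_real (l$k) *s ucol U k"
    and "cinner (ucol U k) (ucol U k) = 1"
    and "cinner (ucol U k) (A *v ucol U k) = of_real (l$k)"
proof -
  have "A ** U = U ** diag_mat l ** (cadj U ** U)"
    by (simp add: A matrix_mul_assoc)
  also have "\<dots> = U ** diag_mat l" using u by (simp add: unitary_mat_def)
  finally have AU: "A ** U = U ** diag_mat l" .
  have "A *v ucol U k = ucol (A ** U) k" by (simp add: ucol_mult)
  then show e: "A *v ucol U k = of_real (l$k) *s ucol U k"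
    by (simp add: AU vec_eq_iff ucol_def diag_right mult.commute)
  show n: "cinner (ucol U k) (ucol U k) = 1"
    using u by (simp add: cinner_ucol unitary_mat_def mat_def)
  show "cinner (ucol U k) (A *v ucol U k) = of_real (l$k)"
    by (simp add: e cinner_smult_right n)
qed

lemma cont_vec_nth[continuous_intros]:
  "continuous_on S f \<Longrightarrow> continuous_on S (\<lambda>x. f x $ i)"
  unfolding continuous_on_def by (auto intro: tendsto_vec_nth)

lemma Re_cinner: "Re (cinner u x) = inner u x"
  by (simp add: cinner_def inner_vec_def inner_complex_def Re_sum)

lemma Im_cinner: "Im (cinner u x) = inner (\<i> *s u) x"
  by (simp add: cinner_def inner_vec_def inner_complex_def Im_sum)

lemma exists_orth:
  fixes E :: "(complex^'n) set"
  assumes fin: "finite E" and card: "card E < CARD('n)"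
  shows "\<exists>x. x \<noteq> 0 \<and> (\<forall>u\<in>E. cinner u x = 0)"
proof -
  define S where "S = E \<union> (\<lambda>u. \<i> *s u) ` E"
  have finS: "finite S" using fin by (simp add: S_def)
  have "card S \<le> card E + card ((\<lambda>u. \<i> *s u) ` E)"
    unfolding S_def by (rule card_Un_le)
  also have "\<dots> \<le> card E + card E" using card_image_le[OF fin] by simp
  finally have "card S < DIM(complex^'n)" using card by simp
  then have "dim S < DIM(complex^'n)" using dim_le_card'[OF finS] by linarith
  then obtain x :: "complex^'n" where x: "x \<noteq> 0" "\<And>y. y \<in> span S \<Longrightarrow> orthogonal x y"
    using orthogonal_to_subspace_exists by blast
  have "cinner u x = 0" if u: "u \<in> E" for u
  proof -
    have "u \<in> span S" "\<i> *s u \<in> span S" using u by (auto simp: S_def intro: span_base)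
    then have "inner x u = 0" "inner x (\<i> *s u) = 0" using x(2) by (auto simp: orthogonal_def)
    then have "Re (cinner u x) = 0" "Im (cinner u x) = 0"
      by (simp_all add: Re_cinner Im_cinner inner_commute)
    then show ?thesis by (simp add: complex_eq_iff)
  qed
  then show ?thesis using x(1) by blast
qed

lemma real_quad_zero:
  fixes D C :: real
  assumes D: "D \<ge> 0" and h: "\<And>t. 2 * t * D + t^2 * C \<le> 0"
  shows "D = 0"
proof (rule ccontr)
  assume "D \<noteq> 0"
  then have Dp: "D > 0" using D by simp
  define s where "s = \<bar>C\<bar> + 1"
  have sp: "s > 0" by (simp add: s_def)
  have "2 * (D/s) * D + (D/s)^2 * C \<le> 0" by (rule h)
  then have "(D^2 / s^2) * (2 * s + C) \<le> 0"
    using sp by (simp add: field_simps power2_eq_square)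
  moreover have "2 * s + C > 0" unfolding s_def by (simp add: abs_if)
  moreover have "D^2 / s^2 > 0" using Dp sp by simp
  ultimately show False using mult_pos_pos[of "D^2 / s^2" "2 * s + C"] by linarith
qed

lemma scaleR_smult: "(r::real) *\<^sub>R (v::complex^'n) = of_real r *s v"
  unfolding vec_eq_iff by (simp add: complex_eq_iff)

lemma normsq_cinner: "(norm z)^2 = Re (cinner z z)"
  by (simp add: cinner_self)

lemma cinner_expand:
  "cinner (v + c *s d) (w + c *s e) = cinner v w + c * cinner v e + cnj c * cinner d w + cnj c * c * cinner d e"
  by (simp add: cinner_add_left cinner_add_right cinner_smult_left cinner_smult_right algebra_simps)

lemma eig_exists:
  fixes A :: "complex^'n^'n" and E :: "(complex^'n) set"
  assumes herm: "cadj A = A"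
    and Eeig: "\<And>u. u \<in> E \<Longrightarrow> \<exists>\<mu>::real. A *v u = of_real \<mu> *s u"
    and ex: "\<exists>x. x \<noteq> 0 \<and> (\<forall>u\<in>E. cinner u x = 0)"
  shows "\<exists>v \<mu>. cinner v v = 1 \<and> (\<forall>u\<in>E. cinner u v = 0) \<and> A *v v = complex_of_real \<mu> *s v"
proof -
  define V where "V = {v. \<forall>u\<in>E. cinner u v = 0}"
  define K where "K = sphere (0::complex^'n) 1 \<inter> V"
  define q where "q v = Re (cinner v (A *v v))" for v
  have Vadd: "v + c *s w \<in> V" if "v \<in> V" "w \<in> V" for v w c
    using that by (simp add: V_def cinner_add_right cinner_smult_right)
  have closedV: "closed V"
  proof -
    have "V = (\<Inter>u\<in>E. {v. cinner u v = 0})" by (auto simp: V_def)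
    moreover have "closed {v. cinner u v = 0}" for u
      unfolding cinner_def by (rule closed_Collect_eq) (intro continuous_intros)+
    ultimately show ?thesis by auto
  qed
  have compK: "compact K" unfolding K_def using closedV by (intro compact_Int_closed compact_sphere)
  obtain x where x: "x \<noteq> 0" "\<forall>u\<in>E. cinner u x = 0" using ex by blast
  define y where "y = (1 / norm x) *\<^sub>R x"
  have "norm y = 1" using x by (simp add: y_def)
  moreover have "cinner u y = 0" if "u \<in> E" for u
    using x that by (simp add: y_def scaleR_smult cinner_smult_right)
  ultimately have "y \<in> K" by (auto simp: K_def V_def)
  then have Kne: "K \<noteq> {}" by blast
  have qeq: "q = (\<lambda>v. Re (\<Sum>i\<in>UNIV. cnj (v$i) * (\<Sum>j\<in>UNIV. A$i$j * v$j)))"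
    by (simp add: fun_eq_iff q_def cinner_def matrix_vector_mult_def)
  have contq: "continuous_on K q"
    unfolding qeq by (intro continuous_intros)
  obtain v where v: "v \<in> K" "\<And>z. z \<in> K \<Longrightarrow> q z \<le> q v"
    using continuous_attains_sup[OF compK Kne contq] by blast
  define lam where "lam = q v"
  have qscale: "q (of_real r *s z) = r^2 * q z" for r z
    by (simp add: q_def mv_smult cinner_smult_left cinner_smult_right power2_eq_square mult.assoc)
  have bound: "q z \<le> lam * (norm z)^2" if z: "z \<in> V" for z
  proof (cases "z = 0")
    case True then show ?thesis by (simp add: q_def)
  next
    case False
    define w where "w = of_real (1 / norm z) *s z"
    have w2: "w = (1 / norm z) *\<^sub>R z" by (simp add: w_def scaleR_smult)
    have "norm w = 1" using False by (simp add: w2)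
    moreover have "w \<in> V" using z Vadd[of 0 z "of_real (1 / norm z)"] by (simp add: w_def V_def)
    ultimately have "w \<in> K" by (simp add: K_def)
    then have qwl: "q w \<le> lam" using v(2) lam_def by blast
    have qw: "q w = (1 / norm z)^2 * q z"
      unfolding w_def by (rule qscale)
    have nz: "norm z > 0" using False by simp
    have "q z = (norm z)^2 * q w" using nz unfolding qw by (simp add: power_divide)
    also have "\<dots> \<le> (norm z)^2 * lam" by (rule mult_left_mono[OF qwl]) simp
    finally show ?thesis by (simp add: mult.commute)
  qed
  have vV: "v \<in> V" and vn: "cinner v v = 1"
    using v(1) by (auto simp: K_def cinner_self)
  define d where "d = A *v v - of_real lam *s v"
  have dV: "d \<in> V"
  proof -
    have "cinner u d = 0" if u: "u \<in> E" for u
    proof -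
      obtain mu :: real where mu: "A *v u = of_real mu *s u" using Eeig[OF u] by blast
      have "cinner u (A *v v) = cinner (A *v u) v" by (rule herm_cinner[OF herm])
      also have "\<dots> = 0" using vV u by (simp add: mu cinner_smult_left V_def)
      finally show ?thesis using vV u by (simp add: d_def cinner_diff_right cinner_smult_right V_def)
    qed
    then show ?thesis by (simp add: V_def)
  qed
  have Av: "A *v v = d + of_real lam *s v" by (simp add: d_def)
  have key: "2 * t * (norm d)^2 + t^2 * (q d - lam * (norm d)^2) \<le> 0" for t
  proof -
    define c where "c = complex_of_real t"
    define z where "z = v + c *s d"
    have zV: "z \<in> V" unfolding z_def by (rule Vadd[OF vV dV])
    have h1: "cinner v (A *v d) = cnj (cinner d (A *v v))"
      by (simp add: herm_cinner[OF herm] cinner_cnj)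
    have "cinner z (A *v z) = cinner v (A *v v) + c * cinner v (A *v d) + cnj c * cinner d (A *v v) + cnj c * c * cinner d (A *v d)"
      unfolding z_def by (simp add: matrix_vector_right_distrib mv_smult cinner_expand)
    then have qz: "q z = lam + 2 * t * Re (cinner d (A *v v)) + t^2 * q d"
      by (simp add: q_def lam_def h1 c_def power2_eq_square)
    have "cinner z z = cinner v v + c * cinner v d + cnj c * cinner d v + cnj c * c * cinner d d"
      unfolding z_def by (simp add: cinner_expand)
    moreover have "cinner v d = cnj (cinner d v)" by (simp add: cinner_cnj)
    ultimately have "Re (cinner z z) = 1 + 2 * t * Re (cinner d v) + t^2 * Re (cinner d d)"
      by (simp add: vn c_def power2_eq_square)
    then have nz: "(norm z)^2 = 1 + 2 * t * Re (cinner d v) + t^2 * (norm d)^2"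
      by (simp add: normsq_cinner)
    have ReA: "Re (cinner d (A *v v)) = (norm d)^2 + lam * Re (cinner d v)"
      by (simp add: Av cinner_add_right cinner_smult_right normsq_cinner)
    have "lam + 2 * t * ((norm d)^2 + lam * Re (cinner d v)) + t^2 * q d
        \<le> lam * (1 + 2 * t * Re (cinner d v) + t^2 * (norm d)^2)"
      using bound[OF zV] unfolding qz nz ReA .
    then show ?thesis by (simp add: algebra_simps)
  qed
  have "(norm d)^2 = 0" by (rule real_quad_zero[OF _ key]) simp
  then have "d = 0" by simp
  then have "A *v v = complex_of_real lam *s v" by (simp add: Av)
  then show ?thesis using vV vn by (auto simp: V_def)
qed

lemma spectral3:
  fixes A :: cmat3
  assumes herm: "cadj A = A"
  shows "\<exists>U l. unitary_mat U \<and> A = U ** diag_mat l ** cadj U"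
proof -
  obtain v1 m1 where v1: "cinner v1 v1 = 1" "A *v v1 = complex_of_real m1 *s v1"
    using eig_exists[OF herm, of "{}"] exists_orth[of "{}"] by auto
  have ex2: "\<exists>x. x \<noteq> 0 \<and> (\<forall>u\<in>{v1}. cinner u x = 0)"
    by (rule exists_orth) auto
  obtain v2 m2 where v2: "cinner v2 v2 = 1" "cinner v1 v2 = 0" "A *v v2 = complex_of_real m2 *s v2"
    using eig_exists[OF herm, of "{v1}", OF _ ex2] v1 by auto
  have ex3: "\<exists>x. x \<noteq> 0 \<and> (\<forall>u\<in>{v1, v2}. cinner u x = 0)"
    by (rule exists_orth) (auto simp: card_insert_if)
  obtain v3 m3 where v3: "cinner v3 v3 = 1" "cinner v1 v3 = 0" "cinner v2 v3 = 0"
      "A *v v3 = complex_of_real m3 *s v3"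
    using eig_exists[OF herm, of "{v1, v2}", OF _ ex3] v1 v2 by auto
  define f :: "3 \<Rightarrow> complex^3" where "f j = (if j = 1 then v1 else if j = 2 then v2 else v3)" for j
  define m :: "3 \<Rightarrow> real" where "m j = (if j = 1 then m1 else if j = 2 then m2 else m3)" for j
  define U :: cmat3 where "U = (\<chi> i j. f j $ i)"
  define l :: "real^3" where "l = (\<chi> j. m j)"
  have c21: "cinner v2 v1 = 0" "cinner v3 v1 = 0" "cinner v3 v2 = 0"
    using v2(2) v3(2) v3(3) cinner_cnj by (metis complex_cnj_zero)+
  have orth: "cinner (f j) (f k) = (if j = k then 1 else 0)" for j k
    using exhaust_3[of j] exhaust_3[of k] v1 v2 v3 c21 by (auto simp: f_def)
  have eig: "A *v f j = complex_of_real (m j) *s f j" for j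
    using v1 v2 v3 by (auto simp: f_def m_def)
  have ucolU: "ucol U j = f j" for j by (simp add: ucol_def U_def vec_eq_iff)
  have UU: "cadj U ** U = mat 1"
  proof -
    have "(cadj U ** U) $ j $ k = mat 1 $ j $ k" for j k
      using cinner_ucol[of U j k] by (simp add: ucolU orth mat_def)
    then show ?thesis by (simp add: vec_eq_iff)
  qed
  then have UU2: "U ** cadj U = mat 1" using matrix_left_right_inverse by blast
  have AU: "A ** U = U ** diag_mat l"
  proof -
    have "(A ** U) $ i $ k = (U ** diag_mat l) $ i $ k" for i k
    proof -
      have "(A ** U) $ i $ k = ucol (A ** U) k $ i" by (simp add: ucol_def)
      also have "\<dots> = (A *v f k) $ i" by (simp add: ucol_mult ucolU)
      also have "\<dots> = f k $ i * complex_of_real (m k)" by (simp add: eig mult.commute)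
      also have "\<dots> = (U ** diag_mat l) $ i $ k" by (simp add: diag_right U_def l_def)
      finally show ?thesis .
    qed
    then show ?thesis by (simp add: vec_eq_iff)
  qed
  have "A = A ** (U ** cadj U)" by (simp add: UU2)
  also have "\<dots> = (A ** U) ** cadj U" by (simp add: matrix_mul_assoc)
  also have "\<dots> = U ** diag_mat l ** cadj U" by (simp add: AU)
  finally show ?thesis using UU UU2 unfolding unitary_mat_def by blast
qed

lemma vn_entropy_ex:
  fixes A :: cmat3
  assumes "cadj A = A"
  shows "\<exists>U l. unitary_mat U \<and> A = U ** diag_mat l ** cadj U \<and> vn_entropy A = - (\<Sum>i\<in>UNIV. eta (l $ i))"
proof -
  obtain U l where "unitary_mat U \<and> A = U ** diag_mat l ** cadj U"
    using spectral3[OF assms] by blast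
  then have "\<exists>s. \<exists>U (l::real^3). unitary_mat U \<and> A = U ** diag_mat l ** cadj U \<and> s = - (\<Sum>i\<in>UNIV. eta (l $ i))"
    by blast
  from someI_ex[OF this] show ?thesis unfolding vn_entropy_def by blast
qed

definition cnjv :: "complex^'n \<Rightarrow> complex^'n" where
  "cnjv u = (\<chi> i. cnj (u$i))"

lemma cinner_quad: "cinner u (M *v u) = (\<Sum>i\<in>UNIV. \<Sum>j\<in>UNIV. cnj (u$i) * M$i$j * u$j)"
  by (simp add: cinner_def matrix_vector_mult_def sum_distrib_left mult.assoc)

lemma cinner_transpose: "cinner u (transpose M *v u) = cinner (cnjv u) (M *v cnjv u)"
proof -
  have "cinner u (transpose M *v u) = (\<Sum>i\<in>UNIV. \<Sum>j\<in>UNIV. cnj (u$i) * M$j$i * u$j)"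
    unfolding cinner_quad transpose_def by simp
  also have "\<dots> = (\<Sum>j\<in>UNIV. \<Sum>i\<in>UNIV. cnj (u$i) * M$j$i * u$j)" by (rule sum.swap)
  also have "\<dots> = cinner (cnjv u) (M *v cnjv u)"
    by (simp add: cinner_quad cnjv_def mult.commute mult.left_commute)
  finally show ?thesis .
qed

lemma norm_cnjv: "norm (cnjv u) = norm u"
  by (simp add: norm_vec_def cnjv_def)

lemma mv_add: "(A + B) *v x = A *v x + B *v (x::complex^'n)"
  by (simp add: vec_eq_iff matrix_vector_mult_def sum.distrib distrib_right)
lemma mv_diff: "(A - B) *v x = A *v x - B *v (x::complex^'n)"
  by (simp add: vec_eq_iff matrix_vector_mult_def sum_subtractf left_diff_distrib)
lemma sc_complex: "r *\<^sub>R (z::complex) = of_real r * z"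
  by (simp add: scaleR_conv_of_real)
lemma mv_scaleR: "(r *\<^sub>R A) *v x = of_real r *s (A *v (x::complex^'n))"
  by (simp add: vec_eq_iff matrix_vector_mult_def sum_distrib_left sc_complex mult.assoc)
lemma sum_delta_mult: "(\<Sum>j\<in>(UNIV::'n::finite set). (if i = j then a else 0) * f j) = a * (f i :: complex)"
proof -
  have "(\<Sum>j\<in>(UNIV::'n set). (if i = j then a else 0) * f j) = (\<Sum>j\<in>UNIV. if i = j then a * f j else 0)"
    by (rule sum.cong) auto
  then show ?thesis by simp
qed

lemma mv_mat: "(mat c :: complex^'n^'n) *v x = c *s x"
proof -
  have "(mat c *v x) $ i = (c *s x) $ i" for i
  proof -
    have "(mat c *v x) $ i = (\<Sum>j\<in>UNIV. (if i = j then c else 0) * x$j)"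
      by (simp add: matrix_vector_mult_def mat_def)
    also have "\<dots> = c * x$i" by (rule sum_delta_mult)
    finally show ?thesis by simp
  qed
  then show ?thesis by (simp add: vec_eq_iff)
qed

lemma psd_quad: "psd A \<Longrightarrow> Re (cinner v (A *v v)) \<ge> 0"
  by (simp add: psd_def cinner_def)

lemma decomp_l:
  assumes u: "unitary_mat U" and A: "A = U ** diag_mat l ** cadj U"
  shows "l$k = Re (cinner (ucol U k) (A *v ucol U k))" and "norm (ucol U k) = 1"
proof -
  show "l$k = Re (cinner (ucol U k) (A *v ucol U k))" using decomp_eig(3)[OF u A] by simp
  have "cinner (ucol U k) (ucol U k) = 1" by (rule decomp_eig(2)[OF u A])
  then have "(norm (ucol U k))^2 = 1" by (simp add: normsq_cinner)
  then show "norm (ucol U k) = 1" using norm_ge_zero[of "ucol U k"] by (simp add: power2_eq_1_iff)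
qed

lemma trace_diag: "trace (diag_mat l) = complex_of_real (\<Sum>i\<in>UNIV. l$i)"
  by (simp add: trace_def diag_mat_def)

lemma decomp_sum:
  assumes u: "unitary_mat U" and A: "A = U ** diag_mat l ** cadj U"
  shows "complex_of_real (\<Sum>i\<in>UNIV. l$i) = trace A"
proof -
  have "trace A = trace (U ** (diag_mat l ** cadj U))" by (simp add: A matrix_mul_assoc)
  also have "\<dots> = trace ((diag_mat l ** cadj U) ** U)" by (rule trace_mul_sym)
  also have "(diag_mat l ** cadj U) ** U = diag_mat l"
    using u by (simp add: matrix_mul_assoc[symmetric] unitary_mat_def)
  finally show ?thesis by (simp add: trace_diag)
qed

lemma decomp_psd_bounds:
  assumes u: "unitary_mat U" and A: "A = U ** diag_mat l ** cadj U" and p: "psd A"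
    and tr: "trace A = 1"
  shows "l$k \<ge> 0" and "(\<Sum>i\<in>UNIV. l$i) = 1"
proof -
  show "l$k \<ge> 0" using decomp_l(1)[OF u A] psd_quad[OF p] by simp
  show "(\<Sum>i\<in>UNIV. l$i) = 1" using decomp_sum[OF u A] tr
    by (metis of_real_eq_1_iff)
qed

lemma density_quad:
  fixes \<rho> :: cmat3
  assumes d: "density \<rho>"
  shows "0 \<le> Re (cinner w (\<rho> *v w))" and "Re (cinner w (\<rho> *v w)) \<le> (norm w)^2"
proof -
  have p: "psd \<rho>" and tr: "trace \<rho> = 1" using d by (auto simp: density_def)
  show "0 \<le> Re (cinner w (\<rho> *v w))" by (rule psd_quad[OF p])
  have h: "cadj \<rho> = \<rho>" using p by (simp add: psd_def)
  obtain U l where u: "unitary_mat U" and A: "\<rho> = U ** diag_mat l ** cadj U"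
    using spectral3[OF h] by blast
  have l0: "l$k \<ge> 0" for k by (rule decomp_psd_bounds(1)[OF u A p tr])
  have l1: "(\<Sum>i\<in>UNIV. l$i) = 1" by (rule decomp_psd_bounds(2)[OF u A p tr])
  have lk1: "l$k \<le> 1" for k
    using member_le_sum[of k UNIV "\<lambda>i. l$i"] l0 l1 by simp
  define c where "c = cadj U *v w"
  have "cinner w (\<rho> *v w) = cinner w (U *v (diag_mat l *v c))"
    by (simp add: A c_def matrix_vector_mul_assoc matrix_mul_assoc)
  also have "\<dots> = cinner c (diag_mat l *v c)" by (simp add: cinner_adj c_def)
  also have "\<dots> = (\<Sum>i\<in>UNIV. complex_of_real (l$i * (cmod (c$i))^2))"
  proof -
    have "(diag_mat l *v c) $ i = of_real (l$i) * c$i" for i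
    proof -
      have "(diag_mat l *v c) $ i = (\<Sum>j\<in>UNIV. (if i = j then complex_of_real (l$i) else 0) * c$j)"
        by (simp add: matrix_vector_mult_def diag_mat_def)
      also have "\<dots> = of_real (l$i) * c$i" by (rule sum_delta_mult)
      finally show ?thesis .
    qed
    then have "cnj (c$i) * (diag_mat l *v c) $ i = complex_of_real (l$i * (cmod (c$i))^2)" for i
    proof -
      have "cnj (c$i) * (diag_mat l *v c) $ i = of_real (l$i) * (cnj (c$i) * c$i)"
        by (simp add: \<open>\<And>i. (diag_mat l *v c) $ i = of_real (l$i) * c$i\<close>)
      also have "\<dots> = of_real (l$i) * of_real ((cmod (c$i))^2)" by (simp only: cnj_sq)
      finally show ?thesis by simp
    qed
    then show ?thesis unfolding cinner_def by (intro sum.cong refl) simp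
  qed
  finally have eq: "Re (cinner w (\<rho> *v w)) = (\<Sum>i\<in>UNIV. l$i * (cmod (c$i))^2)"
    by (simp add: Re_sum)
  have "cinner c c = cinner w (U *v c)" by (simp add: cinner_adj c_def)
  also have "U *v c = w" using u by (simp add: c_def matrix_vector_mul_assoc unitary_mat_def)
  finally have "(norm c)^2 = (norm w)^2" by (simp add: normsq_cinner)
  then have nc: "(\<Sum>i\<in>UNIV. (cmod (c$i))^2) = (norm w)^2" by (simp add: norm_sq_vec)
  have "(\<Sum>i\<in>UNIV. l$i * (cmod (c$i))^2) \<le> (\<Sum>i\<in>UNIV. (cmod (c$i))^2)"
    by (intro sum_mono mult_left_le_one_le) (auto simp: l0 lk1)
  then show "Re (cinner w (\<rho> *v w)) \<le> (norm w)^2" using eq nc by simp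
qed

lemma eta_eq: "eta t = t * log 2 t"
  by (simp add: eta_def)

lemma eta_convex: "convex_on {0<..} (\<lambda>t::real. t * log 2 t)"
proof (rule convex_on_realI[where f' = "\<lambda>t. log 2 t + 1 / ln 2"])
  show "connected {0::real<..}" by simp
  fix t :: real assume t: "t \<in> {0<..}"
  then have "((\<lambda>t. t * log 2 t) has_real_derivative (1 * log 2 t + (1 / (ln 2 * t)) * t)) (at t)"
    by (intro DERIV_mult DERIV_ident DERIV_log) auto
  then show "((\<lambda>t. t * log 2 t) has_real_derivative (log 2 t + 1 / ln 2)) (at t)"
    using t by simp
next
  fix x y :: real assume "x \<in> {0<..}" "y \<in> {0<..}" "x \<le> y"
  then show "log 2 x + 1 / ln 2 \<le> log 2 y + 1 / ln 2" by simp
qed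

lemma eta_superadd:
  assumes a: "0 \<le> a" and b: "0 \<le> b"
  shows "eta a + eta b \<le> eta (a + b)"
proof -
  have h: "x * log 2 x \<le> x * log 2 (x + y)" if "0 \<le> x" "0 \<le> y" for x y :: real
  proof (cases "x = 0")
    case False
    then have "log 2 x \<le> log 2 (x + y)" using that by simp
    then show ?thesis using that by (simp add: mult_left_mono)
  qed simp
  have "eta a + eta b \<le> a * log 2 (a + b) + b * log 2 (b + a)"
    using h[OF a b] h[OF b a] by (simp add: eta_eq)
  also have "\<dots> = eta (a + b)" by (simp add: eta_eq add.commute distrib_right)
  finally show ?thesis .
qed

lemma eta_transfer:
  fixes u a b v :: real
  assumes u0: "0 \<le> u" and ua: "u \<le> a" and ub: "u \<le> b" and av: "a \<le> v" and bv: "b \<le> v"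
    and s: "u + v = a + b"
  shows "eta a + eta b \<le> eta u + eta v"
proof (cases "u = 0")
  case True
  then have "v = a + b" using s by simp
  then show ?thesis using eta_superadd[of a b] True ua ub by (simp add: eta_def)
next
  case False
  then have up: "u > 0" using u0 by simp
  show ?thesis
  proof (cases "u = v")
    case True
    then have "a = u" "b = u" using ua ub av bv by auto
    then show ?thesis using True by simp
  next
    case False
    then have uv: "u < v" using ua av by simp
    define th where "th = (b - u) / (v - u)"
    have th0: "0 \<le> th" and th1: "th \<le> 1" using ub bv uv by (auto simp: th_def field_simps)
    have e: "th * (v - u) = b - u" using uv by (simp add: th_def)
    have e2: "th * v - th * u = b - u" using e by (simp add: right_diff_distrib)
    have "(1 - th) * u + th * v = u + (th * v - th * u)" by (simp add: algebra_simps)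
    then have bq: "b = (1 - th) * u + th * v" using e2 by linarith
    have "th * u + (1 - th) * v = v - (th * v - th * u)" by (simp add: algebra_simps)
    then have aq: "a = th * u + (1 - th) * v" using e2 s by linarith
    have U: "u \<in> {0<..}" and V: "v \<in> {0<..}" using up uv by auto
    have "eta b \<le> (1 - th) * eta u + th * eta v"
      using convex_onD[OF eta_convex th0 th1 U V] by (simp add: eta_eq bq[symmetric])
    moreover have "eta a \<le> (1 - (1 - th)) * eta u + (1 - th) * eta v"
      using convex_onD[OF eta_convex _ _ U V, of "1 - th"] th0 th1 by (simp add: eta_eq aq[symmetric])
    ultimately show ?thesis by (simp add: algebra_simps)
  qed
qed

lemma entropy_lower_sorted:
  fixes p1 p2 p3 m :: real
  assumes "0 \<le> p3" "p3 \<le> p2" "p2 \<le> p1" "p1 \<le> m" "1/2 \<le> m" "m \<le> 1" "p1 + p2 + p3 = 1"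
  shows "eta p1 + eta p2 + eta p3 \<le> eta m + eta (1 - m)"
proof (cases "p1 + p3 \<le> m")
  case True
  have "eta p1 + eta p3 \<le> eta 0 + eta (p1 + p3)"
    by (rule eta_transfer) (use assms in auto)
  moreover have "eta (p1 + p3) + eta p2 \<le> eta (1 - m) + eta m"
    by (rule eta_transfer) (use assms True in auto)
  ultimately show ?thesis by (simp add: eta_def)
next
  case False
  have "eta p1 + eta p3 \<le> eta (p1 + p3 - m) + eta m"
    by (rule eta_transfer) (use assms False in auto)
  moreover have "eta p2 + eta (p1 + p3 - m) \<le> eta 0 + eta (1 - m)"
  proof (cases "p2 \<le> p1 + p3 - m")
    case True
    show ?thesis by (rule eta_transfer) (use assms False True in auto)
  next
    case F2: False
    have "eta (p1 + p3 - m) + eta p2 \<le> eta 0 + eta (1 - m)"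
      by (rule eta_transfer) (use assms False F2 in auto)
    then show ?thesis by simp
  qed
  ultimately show ?thesis by (simp add: eta_def)
qed

lemma entropy_lower:
  fixes p1 p2 p3 m :: real
  assumes "0 \<le> p1" "0 \<le> p2" "0 \<le> p3" "p1 \<le> m" "p2 \<le> m" "p3 \<le> m" "1/2 \<le> m" "m \<le> 1"
    "p1 + p2 + p3 = 1"
  shows "eta p1 + eta p2 + eta p3 \<le> eta m + eta (1 - m)"
proof -
  have "p1 \<le> p2 \<and> p2 \<le> p3 \<or> p1 \<le> p3 \<and> p3 \<le> p2 \<or> p2 \<le> p1 \<and> p1 \<le> p3 \<or>
        p2 \<le> p3 \<and> p3 \<le> p1 \<or> p3 \<le> p1 \<and> p1 \<le> p2 \<or> p3 \<le> p2 \<and> p2 \<le> p1" by linarith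
  then show ?thesis
  proof (elim disjE conjE)
    assume "p1 \<le> p2" "p2 \<le> p3"
    then show ?thesis using entropy_lower_sorted[of p1 p2 p3 m] assms by linarith
  next
    assume "p1 \<le> p3" "p3 \<le> p2"
    then show ?thesis using entropy_lower_sorted[of p1 p3 p2 m] assms by linarith
  next
    assume "p2 \<le> p1" "p1 \<le> p3"
    then show ?thesis using entropy_lower_sorted[of p2 p1 p3 m] assms by linarith
  next
    assume "p2 \<le> p3" "p3 \<le> p1"
    then show ?thesis using entropy_lower_sorted[of p2 p3 p1 m] assms by linarith
  next
    assume "p3 \<le> p1" "p1 \<le> p2"
    then show ?thesis using entropy_lower_sorted[of p3 p1 p2 m] assms by linarith
  next
    assume "p3 \<le> p2" "p2 \<le> p1"
    then show ?thesis using entropy_lower_sorted[of p3 p2 p1 m] assms by linarith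
  qed
qed

lemma neg_eta_bound:
  assumes t: "0 \<le> t"
  shows "- eta t \<le> t * log 2 3 + (1/3 - t) / ln 2"
proof (cases "t = 0")
  case True then show ?thesis by (simp add: eta_def)
next
  case False
  then have tp: "t > 0" using t by simp
  have "ln (1 / (3 * t)) \<le> 1 / (3 * t) - 1" using tp by (intro ln_le_minus_one) simp
  then have "t * ln (1 / (3 * t)) \<le> t * (1 / (3 * t) - 1)" using tp by (simp add: mult_left_mono)
  also have "\<dots> = 1/3 - t" using tp by (simp add: field_simps)
  finally have h: "t * ln (1 / (3 * t)) \<le> 1/3 - t" .
  have l: "ln (1 / (3 * t)) = - ln 3 - ln t" using tp by (simp add: ln_div ln_mult)
  from h have "t * (- ln 3 - ln t) \<le> 1/3 - t" by (simp only: l)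
  then have "- (t * ln t) - t * ln 3 \<le> 1/3 - t" by (simp add: algebra_simps)
  then have "(- (t * ln t) - t * ln 3) / ln 2 \<le> (1/3 - t) / ln 2" by (simp add: divide_right_mono)
  then show ?thesis by (simp add: eta_eq log_def diff_divide_distrib)
qed

lemma entropy_upper:
  fixes p1 p2 p3 :: real
  assumes "0 \<le> p1" "0 \<le> p2" "0 \<le> p3" "p1 + p2 + p3 = 1"
  shows "- (eta p1 + eta p2 + eta p3) \<le> log 2 3"
proof -
  have "- (eta p1 + eta p2 + eta p3) \<le> (p1 + p2 + p3) * log 2 3 + (1 - (p1 + p2 + p3)) / ln 2"
    using neg_eta_bound[OF assms(1)] neg_eta_bound[OF assms(2)] neg_eta_bound[OF assms(3)]
    by (simp add: algebra_simps add_divide_distrib diff_divide_distrib)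
  then show ?thesis using assms(4) by simp
qed

lemma cadj_diff: "cadj (A - B) = cadj A - cadj B"
  by (simp add: cadj_def vec_eq_iff)

lemma trace_scaleR: "trace (r *\<^sub>R (A::cmat3)) = of_real r * trace A"
  by (simp add: trace_def sum_3 sc_complex algebra_simps)

lemma trace_transpose3: "trace (transpose (A::cmat3)) = trace A"
  by (simp add: trace_def sum_3 transpose_def)

lemma trace_mat3: "trace (mat c :: cmat3) = 3 * c"
  by (simp add: trace_def sum_3 mat_def)

lemma Lambda_alt: "trace \<rho> = 1 \<Longrightarrow> Lambda x \<rho> = (1 - x) *\<^sub>R \<rho> + (x / 2) *\<^sub>R (mat 1 - transpose \<rho>)"
  by (simp add: Lambda_def)

lemma Lambda_herm:
  assumes d: "density \<rho>"
  shows "cadj (Lambda x \<rho>) = Lambda x \<rho>"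
proof -
  have h: "cadj \<rho> = \<rho>" and tr: "trace \<rho> = 1" using d by (auto simp: density_def psd_def)
  show ?thesis
    by (simp add: Lambda_alt[OF tr] cadj_add cadj_scaleR cadj_diff cadj_mat cadj_transpose h)
qed

lemma Lambda_trace:
  assumes d: "density \<rho>"
  shows "trace (Lambda x \<rho>) = 1"
proof -
  have tr: "trace \<rho> = 1" using d by (auto simp: density_def)
  show ?thesis
    by (simp add: Lambda_alt[OF tr] trace_add trace_sub trace_scaleR trace_transpose3 trace_mat3 tr
        algebra_simps)
qed

lemma Lambda_quad:
  assumes d: "density \<rho>"
  shows "Re (cinner u (Lambda x \<rho> *v u)) =
     (1 - x) * Re (cinner u (\<rho> *v u)) + x / 2 * ((norm u)^2 - Re (cinner (cnjv u) (\<rho> *v cnjv u)))"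
proof -
  have tr: "trace \<rho> = 1" using d by (auto simp: density_def)
  have "cinner u (Lambda x \<rho> *v u) = of_real (1 - x) * cinner u (\<rho> *v u)
      + of_real (x / 2) * (cinner u u - cinner u (transpose \<rho> *v u))"
    by (simp add: Lambda_alt[OF tr] mv_add mv_scaleR mv_diff mv_mat cinner_add_right
        cinner_smult_right cinner_diff_right algebra_simps del: transpose_matrix_vector)
  then show ?thesis by (simp add: cinner_transpose normsq_cinner del: transpose_matrix_vector)
qed

lemma Lambda_quad_bounds:
  assumes d: "density \<rho>" and x0: "0 \<le> x" and x1: "x \<le> 1"
  shows "0 \<le> Re (cinner u (Lambda x \<rho> *v u))"
    and "norm u = 1 \<Longrightarrow> Re (cinner u (Lambda x \<rho> *v u)) \<le> 1 - x / 2"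
proof -
  define a where "a = Re (cinner u (\<rho> *v u))"
  define b where "b = Re (cinner (cnjv u) (\<rho> *v cnjv u))"
  have a0: "0 \<le> a" and a1: "a \<le> (norm u)^2" unfolding a_def by (rule density_quad[OF d])+
  have b0: "0 \<le> b" and b1: "b \<le> (norm u)^2" unfolding b_def
    using density_quad[OF d, of "cnjv u"] by (simp_all add: norm_cnjv)
  have eq: "Re (cinner u (Lambda x \<rho> *v u)) = (1 - x) * a + x / 2 * ((norm u)^2 - b)"
    unfolding a_def b_def by (rule Lambda_quad[OF d])
  have "0 \<le> (1 - x) * a" using a0 x1 by simp
  moreover have "0 \<le> x / 2 * ((norm u)^2 - b)" using b1 x0 by simp
  ultimately show "0 \<le> Re (cinner u (Lambda x \<rho> *v u))" unfolding eq by linarith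
  assume n: "norm u = 1"
  have "(1 - x) * a \<le> 1 - x" using mult_left_mono[of a 1 "1 - x"] a1 n x1 by simp
  moreover have "x / 2 * ((norm u)^2 - b) \<le> x / 2"
    using mult_left_mono[of "(norm u)^2 - b" 1 "x / 2"] b0 n x0 by simp
  ultimately show "Re (cinner u (Lambda x \<rho> *v u)) \<le> 1 - x / 2" unfolding eq by linarith
qed

lemma Lambda_psd:
  assumes d: "density \<rho>" and x0: "0 \<le> x" and x1: "x \<le> 1"
  shows "psd (Lambda x \<rho>)"
  using Lambda_herm[OF d] Lambda_quad_bounds(1)[OF d x0 x1] by (simp add: psd_def cinner_def)

lemma Lambda_density:
  assumes d: "density \<rho>" and x0: "0 \<le> x" and x1: "x \<le> 1"
  shows "density (Lambda x \<rho>)"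
  using Lambda_psd[OF d x0 x1] Lambda_trace[OF d] by (simp add: density_def)

definition hbin :: "real \<Rightarrow> real" where
  "hbin x = - (x / 2) * log 2 (x / 2) - (1 - x / 2) * log 2 (1 - x / 2)"

lemma hbin_eta: "hbin x = - eta (1 - x / 2) - eta (x / 2)"
  by (simp add: hbin_def eta_eq)

lemma entropy_Lambda_lower:
  assumes d: "density \<rho>" and x0: "0 \<le> x" and x1: "x \<le> 1"
  shows "hbin x \<le> vn_entropy (Lambda x \<rho>)"
proof -
  obtain U l where u: "unitary_mat U" and A: "Lambda x \<rho> = U ** diag_mat l ** cadj U"
    and S: "vn_entropy (Lambda x \<rho>) = - (\<Sum>i\<in>UNIV. eta (l $ i))"
    using vn_entropy_ex[OF Lambda_herm[OF d]] by blast
  have lb: "0 \<le> l$k \<and> l$k \<le> 1 - x / 2" for k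
    using decomp_l[OF u A, of k] Lambda_quad_bounds[OF d x0 x1, of "ucol U k"] by simp
  have ls: "(\<Sum>i\<in>UNIV. l$i) = 1"
    by (rule decomp_psd_bounds(2)[OF u A Lambda_psd[OF d x0 x1] Lambda_trace[OF d]])
  have "eta (l$1) + eta (l$2) + eta (l$3) \<le> eta (1 - x / 2) + eta (1 - (1 - x / 2))"
    by (rule entropy_lower) (use lb ls x0 x1 in \<open>auto simp: sum_3\<close>)
  then show ?thesis by (simp add: S sum_3 hbin_eta)
qed

lemma entropy_upper3:
  fixes A :: cmat3
  assumes p: "psd A" and tr: "trace A = 1"
  shows "vn_entropy A \<le> log 2 3"
proof -
  have h: "cadj A = A" using p by (simp add: psd_def)
  obtain U l where u: "unitary_mat U" and A: "A = U ** diag_mat l ** cadj U"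
    and S: "vn_entropy A = - (\<Sum>i\<in>UNIV. eta (l $ i))"
    using vn_entropy_ex[OF h] by blast
  have l0: "0 \<le> l$k" for k by (rule decomp_psd_bounds(1)[OF u A p tr])
  have ls: "(\<Sum>i\<in>UNIV. l$i) = 1" by (rule decomp_psd_bounds(2)[OF u A p tr])
  show ?thesis using entropy_upper[of "l$1" "l$2" "l$3"] l0 ls by (simp add: S sum_3)
qed

definition psi :: "3 \<Rightarrow> 3 \<Rightarrow> real \<Rightarrow> complex^3" where
  "psi p q s = (\<chi> j. if j = p then complex_of_real s * \<i> / complex_of_real (sqrt 2)
                   else if j = q then 1 / complex_of_real (sqrt 2) else 0)"

lemma sum_pqr:
  assumes "p \<noteq> q" "p \<noteq> r" "q \<noteq> r" "(UNIV::3 set) = {p, q, r}"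
  shows "(\<Sum>j\<in>(UNIV::3 set). f j) = f p + f q + (f r :: complex)"
proof -
  have "(\<Sum>j\<in>(UNIV::3 set). f j) = (\<Sum>j\<in>{p, q, r}. f j)" by (subst assms(4)) (rule refl)
  also have "\<dots> = f p + f q + f r" using assms(1-3) by (simp add: algebra_simps)
  finally show ?thesis .
qed

lemma sq2: "complex_of_real (sqrt 2) * complex_of_real (sqrt 2) = 2"
  by (simp flip: of_real_mult)

lemma sq2': "cnj (complex_of_real (sqrt 2)) = complex_of_real (sqrt 2)"
  by simp

lemma proj_entries:
  assumes pq: "p \<noteq> q" "p \<noteq> r" "q \<noteq> r" and s: "s = 1 \<or> s = -1"
  shows "proj (psi p q s) $ p $ p = 1/2" "proj (psi p q s) $ q $ q = 1/2"
    "proj (psi p q s) $ p $ q = complex_of_real s * \<i> / 2"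
    "proj (psi p q s) $ q $ p = - complex_of_real s * \<i> / 2"
    "proj (psi p q s) $ r $ j = 0" "proj (psi p q s) $ j $ r = 0"
  using pq s by (auto simp: proj_def psi_def field_simps sq2)

lemma psi_norm:
  assumes pq: "p \<noteq> q" "p \<noteq> r" "q \<noteq> r" and U: "(UNIV::3 set) = {p, q, r}"
    and s: "s = 1 \<or> s = -1"
  shows "cinner (psi p q s) (psi p q s) = 1"
  using pq s unfolding cinner_def sum_pqr[OF pq U] by (auto simp: psi_def field_simps sq2)

lemma trace_proj: "trace (proj v) = cinner v v"
  by (simp add: trace_def proj_def cinner_def mult.commute)

lemma proj_density:
  assumes v: "cinner v v = 1"
  shows "density (proj v)"
proof -
  have h: "cadj (proj v) = proj v" by (simp add: cadj_def proj_def vec_eq_iff mult.commute)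
  have mv: "proj v *v w = cinner v w *s v" for w
    by (simp add: proj_def matrix_vector_mult_def cinner_def vec_eq_iff sum_distrib_left mult.commute mult.left_commute)
  have "Re (cinner w (proj v *v w)) \<ge> 0" for w
  proof -
    have "cinner w (proj v *v w) = cnj (cinner v w) * cinner v w"
      by (simp add: mv cinner_smult_right cinner_cnj mult.commute)
    also have "\<dots> = of_real ((cmod (cinner v w))^2)" by (rule cnj_sq)
    finally show ?thesis by simp
  qed
  then have "psd (proj v)" using h by (simp add: psd_def cinner_def)
  then show ?thesis using v by (simp add: density_def trace_proj)
qed

lemma M_eig:
  assumes pq: "p \<noteq> q" "p \<noteq> r" "q \<noteq> r" and U: "(UNIV::3 set) = {p, q, r}"
    and s: "s = 1 \<or> s = -1"
    and eig: "Lambda x (proj (psi p q s)) *v u = complex_of_real l *s u"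
  shows "complex_of_real l * (u$q + complex_of_real s * \<i> * u$p) = 0"
    and "u \<noteq> 0 \<Longrightarrow> l = 0 \<or> l = 1 - x / 2 \<or> l = x / 2"
proof -
  define P where "P = proj (psi p q s)"
  define M where "M = Lambda x P"
  have tr: "trace P = 1" unfolding P_def trace_proj by (rule psi_norm[OF pq U s])
  have Mij: "M$i$j = of_real (1 - x) * P$i$j + of_real (x / 2) * ((if i = j then 1 else 0) - P$j$i)" for i j
    by (simp add: M_def Lambda_alt[OF tr] mat_def transpose_def sc_complex)
  have Mv: "(M *v u)$i = M$i$p * u$p + M$i$q * u$q + M$i$r * u$r" for i
    by (simp add: matrix_vector_mult_def sum_pqr[OF pq U])
  have ev: "(M *v u)$i = of_real l * u$i" for i using eig by (simp add: M_def P_def)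
  note pe = proj_entries[OF pq s, folded P_def]
  define X where "X = complex_of_real x"
  define S where "S = complex_of_real s"
  define L where "L = complex_of_real l"
  have S2: "S^2 = 1" using s by (auto simp: S_def)
  have i2: "\<i> * \<i> = (-1::complex)" by simp
  have E1: "L * u$p = ((1 - X) / 2 + X / 2 * (1 - 1/2)) * u$p + ((1 - X) * (S * \<i>) / 2 + X / 2 * (S * \<i> / 2)) * u$q"
    using ev[of p] Mv[of p] pq by (simp add: Mij pe X_def S_def L_def)
  have E2: "L * u$q = ((1 - X) * (- S * \<i> / 2) - X / 2 * (S * \<i> / 2)) * u$p + ((1 - X) / 2 + X / 2 * (1 - 1/2)) * u$q"
    using ev[of q] Mv[of q] pq by (simp add: Mij pe X_def S_def L_def)
  have E3: "L * u$r = X / 2 * u$r"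
    using ev[of r] Mv[of r] pq by (simp add: Mij pe X_def S_def L_def) metis
  define c where "c = (1 - X) / 2 + X / 4"
  have E1': "L * u$p = c * u$p + S * \<i> * c * u$q" using E1 by (simp add: c_def algebra_simps)
  have E2': "L * u$q = - S * \<i> * c * u$p + c * u$q" using E2 unfolding c_def by (simp add: field_simps) algebra
  show G1: "complex_of_real l * (u$q + complex_of_real s * \<i> * u$p) = 0"
    unfolding L_def[symmetric] S_def[symmetric] using E1' E2' S2 i2 by algebra
  assume u0: "u \<noteq> 0"
  show "l = 0 \<or> l = 1 - x / 2 \<or> l = x / 2"
  proof (cases "l = 0")
    case False
    then have L0: "L \<noteq> 0" by (simp add: L_def)
    have "L * (u$q + S * \<i> * u$p) = 0"
      using G1 unfolding L_def[symmetric] S_def[symmetric] .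
    then have "u$q + S * \<i> * u$p = 0" using L0 by (metis mult_eq_0_iff)
    then have uq: "u$q = - S * \<i> * u$p" by algebra
    have "(L - 2 * c) * u$p = 0"
      using E1' S2 i2 unfolding uq by algebra
    moreover have "2 * c = 1 - X / 2" by (simp add: c_def field_simps)
    ultimately have "(L - (1 - X / 2)) * u$p = 0" by simp
    then have "L = 1 - X / 2 \<or> u$p = 0" by simp
    then show ?thesis
    proof
      assume "L = 1 - X / 2"
      then have "l = 1 - x / 2" unfolding L_def X_def
        by (metis of_real_1 of_real_diff of_real_divide of_real_eq_iff of_real_numeral)
      then show ?thesis by simp
    next
      assume up: "u$p = 0"
      then have uq0: "u$q = 0" using uq by simp
      have "u$r \<noteq> 0"
      proof
        assume "u$r = 0"
        then have "u$i = 0" for i using up uq0 U by (metis (mono_tags) UNIV_I empty_iff insert_iff)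
        then show False using u0 by (simp add: vec_eq_iff)
      qed
      then have "L = X / 2" using E3 by simp
      then have "l = x / 2" unfolding L_def X_def
        by (metis of_real_divide of_real_eq_iff of_real_numeral)
      then show ?thesis by simp
    qed
  qed simp
qed

lemma combo:
  fixes l1 l2 l3 a b :: real
  assumes "l1 \<in> {0,a,b}" "l2 \<in> {0,a,b}" "l3 \<in> {0,a,b}" "a + b = 1" "0 \<le> b" "b \<le> 1/2"
    "l1 + l2 + l3 = 1" "l1 = 0 \<or> l2 = 0 \<or> l3 = 0"
  shows "eta l1 + eta l2 + eta l3 = eta a + eta b"
proof -
  have e0: "eta 0 = 0" by (simp add: eta_def)
  show ?thesis using assms e0 by (auto; smt (verit))
qed

lemma rows_cinner:
  "cinner (\<chi> k. cnj (U$a$k)) (\<chi> k. cnj (U$b$k)) = (U ** cadj U)$a$b"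
  by (simp add: cinner_def matrix_matrix_mult_def cadj_def)

lemma entropy_psi:
  assumes pq: "p \<noteq> q" "p \<noteq> r" "q \<noteq> r" and Uv: "(UNIV::3 set) = {p, q, r}"
    and s: "s = 1 \<or> s = -1" and x0: "0 \<le> x" and x1: "x \<le> 1"
  shows "vn_entropy (Lambda x (proj (psi p q s))) = hbin x"
proof -
  define \<rho> where "\<rho> = proj (psi p q s)"
  have d: "density \<rho>" unfolding \<rho>_def by (rule proj_density[OF psi_norm[OF pq Uv s]])
  obtain U l where u: "unitary_mat U" and A: "Lambda x \<rho> = U ** diag_mat l ** cadj U"
    and S: "vn_entropy (Lambda x \<rho>) = - (\<Sum>i\<in>UNIV. eta (l $ i))"
    using vn_entropy_ex[OF Lambda_herm[OF d]] by blast
  have eigk: "Lambda x (proj (psi p q s)) *v ucol U k = complex_of_real (l$k) *s ucol U k" for k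
    using decomp_eig(1)[OF u A] by (simp add: \<rho>_def)
  have nz: "ucol U k \<noteq> 0" for k
    using decomp_eig(2)[OF u A, of k] by auto
  have lk: "l$k \<in> {0, 1 - x / 2, x / 2}" for k
    using M_eig(2)[OF pq Uv s eigk nz] by auto
  have ls: "(\<Sum>i\<in>UNIV. l$i) = 1"
    using decomp_sum[OF u A] Lambda_trace[OF d] by (metis of_real_eq_1_iff)
  define c where "c = - (complex_of_real s * \<i>)"
  define z where "z = (\<chi> k. cnj (U$q$k)) + c *s (\<chi> k. cnj (U$p$k))"
  have UU: "U ** cadj U = mat 1" using u by (simp add: unitary_mat_def)
  have "cinner z z = 1 + cnj c * c"
    unfolding z_def cinner_expand rows_cinner UU using pq by (simp add: mat_def)
  also have "cnj c * c = 1" using s by (auto simp: c_def)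
  finally have "cinner z z = 2" by simp
  then have "z \<noteq> 0" by auto
  then obtain k where zk: "z$k \<noteq> 0" by (auto simp: vec_eq_iff)
  have "cnj (z$k) = U$q$k + complex_of_real s * \<i> * U$p$k"
    using s by (auto simp: z_def c_def)
  then have yk: "U$q$k + complex_of_real s * \<i> * U$p$k \<noteq> 0" using zk by (metis complex_cnj_zero_iff)
  have "complex_of_real (l$k) * (U$q$k + complex_of_real s * \<i> * U$p$k) = 0"
    using M_eig(1)[OF pq Uv s eigk[of k]] by (simp add: ucol_def)
  then have "l$k = 0" using yk by simp
  then have zero: "l$1 = 0 \<or> l$2 = 0 \<or> l$3 = 0" using exhaust_3[of k] by auto
  have "eta (l$1) + eta (l$2) + eta (l$3) = eta (1 - x / 2) + eta (x / 2)"
    by (rule combo) (use lk ls zero x0 x1 in \<open>auto simp: sum_3\<close>)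
  then show ?thesis unfolding \<rho>_def[symmetric] by (simp add: S sum_3 hbin_eta)
qed

lemma Lambda_entry: "(Lambda x A) $ i $ j = of_real (1 - x) * A$i$j + of_real (x / 2) * ((if i = j then trace A else 0) - A$j$i)"
  by (simp add: Lambda_def mat_def transpose_def sc_complex)

lemma Lambda_add: "Lambda x (A + B) = Lambda x A + Lambda x B"
  by (simp add: vec_eq_iff Lambda_entry trace_add algebra_simps)

lemma Lambda_scale: "Lambda x (r *\<^sub>R A) = r *\<^sub>R Lambda x A"
  by (simp add: vec_eq_iff Lambda_entry trace_scaleR sc_complex algebra_simps)

lemma Lambda_zero: "Lambda x 0 = 0"
  by (simp add: vec_eq_iff Lambda_entry trace_def)

lemma Lambda_sum: fixes n :: nat shows "Lambda x (\<Sum>i<n. f i) = (\<Sum>i<n. Lambda x (f i))"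
  by (induction n) (simp_all add: Lambda_zero Lambda_add)

lemma cadj_sum: fixes n :: nat shows "cadj (\<Sum>i<n. f i) = (\<Sum>i<n. cadj (f i))"
proof (induction n)
  case 0 then show ?case by (simp add: cadj_def vec_eq_iff)
next
  case (Suc n) then show ?case by (simp add: cadj_add)
qed

lemma cinner_sum: fixes n :: nat shows "cinner v ((\<Sum>i<n. f i) *v v) = (\<Sum>i<n. cinner v (f i *v v))"
  by (induction n) (simp_all add: mv_add cinner_add_right)

lemma trace_sum: fixes n :: nat shows "trace (\<Sum>i<n. f i :: cmat3) = (\<Sum>i<n. trace (f i))"
proof (induction n)
  case 0 then show ?case by (simp add: trace_def)
next
  case (Suc n) then show ?case by (simp add: trace_add)
qed

lemma holevo_upper:
  fixes n :: nat and p :: "nat \<Rightarrow> real" and \<rho> :: "nat \<Rightarrow> cmat3"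
  assumes x0: "0 \<le> x" and x1: "x \<le> 1"
    and c: "\<forall>i<n. p i \<ge> 0 \<and> density (\<rho> i)" and ps: "(\<Sum>i<n. p i) = 1"
  shows "vn_entropy (\<Sum>i<n. p i *\<^sub>R Lambda x (\<rho> i)) - (\<Sum>i<n. p i * vn_entropy (Lambda x (\<rho> i)))
         \<le> log 2 3 - hbin x"
proof -
  define B where "B = (\<Sum>i<n. p i *\<^sub>R Lambda x (\<rho> i))"
  have herm: "cadj B = B"
    unfolding B_def cadj_sum by (intro sum.cong refl) (simp add: cadj_scaleR Lambda_herm c)
  have "Re (cinner v (B *v v)) \<ge> 0" for v
  proof -
    have "Re (cinner v (B *v v)) = (\<Sum>i<n. p i * Re (cinner v (Lambda x (\<rho> i) *v v)))"
      unfolding B_def cinner_sum by (simp add: mv_scaleR cinner_smult_right Re_sum)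
    also have "\<dots> \<ge> 0"
      using c Lambda_quad_bounds(1)[OF _ x0 x1] by (intro sum_nonneg) simp
    finally show ?thesis .
  qed
  then have psdB: "psd B" using herm by (simp add: psd_def cinner_def)
  have "trace B = (\<Sum>i<n. complex_of_real (p i))"
    unfolding B_def trace_sum by (intro sum.cong refl) (simp add: trace_scaleR Lambda_trace c)
  then have trB: "trace B = 1" using ps by (metis of_real_1 of_real_sum)
  have S1: "vn_entropy B \<le> log 2 3" by (rule entropy_upper3[OF psdB trB])
  have "(\<Sum>i<n. p i * hbin x) \<le> (\<Sum>i<n. p i * vn_entropy (Lambda x (\<rho> i)))"
    using c entropy_Lambda_lower[OF _ x0 x1] by (intro sum_mono mult_left_mono) auto
  moreover have "(\<Sum>i<n. p i * hbin x) = hbin x" using ps by (simp add: sum_distrib_right[symmetric])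
  ultimately show ?thesis using S1 unfolding B_def by linarith
qed

definition ens :: "nat \<Rightarrow> cmat3" where
  "ens i = (if i = 0 then proj (psi 1 2 1) else if i = 1 then proj (psi 1 2 (-1))
     else if i = 2 then proj (psi 2 3 1) else if i = 3 then proj (psi 2 3 (-1))
     else if i = 4 then proj (psi 3 1 1) else proj (psi 3 1 (-1)))"

lemma U123: "(UNIV::3 set) = {1, 2, 3}" "(UNIV::3 set) = {2, 3, 1}" "(UNIV::3 set) = {3, 1, 2}"
  using UNIV_3 by auto

lemma ens_gen:
  assumes pq: "p \<noteq> q" "p \<noteq> r" "q \<noteq> r" and U: "(UNIV::3 set) = {p, q, r}"
    and s: "s = 1 \<or> s = -1" and x0: "0 \<le> x" and x1: "x \<le> 1"
  shows "density (proj (psi p q s)) \<and> vn_entropy (Lambda x (proj (psi p q s))) = hbin x"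
  using proj_density[OF psi_norm[OF pq U s]] entropy_psi[OF pq U s x0 x1] by simp

lemma ens_props:
  assumes i: "i < 6" and x0: "0 \<le> x" and x1: "x \<le> 1"
  shows "density (ens i) \<and> vn_entropy (Lambda x (ens i)) = hbin x"
proof -
  have d3: "(1::3) \<noteq> 2" "(1::3) \<noteq> 3" "(2::3) \<noteq> 3" "(2::3) \<noteq> 1" "(3::3) \<noteq> 1" "(3::3) \<noteq> 2"
    by simp_all
  have "i = 0 \<or> i = 1 \<or> i = 2 \<or> i = 3 \<or> i = 4 \<or> i = 5" using i by auto
  then show ?thesis
  proof (elim disjE)
    assume "i = 0" then show ?thesis using ens_gen[OF d3(1) d3(2) d3(3) U123(1) _ x0 x1, of 1] by (simp add: ens_def)
  next
    assume "i = 1" then show ?thesis using ens_gen[OF d3(1) d3(2) d3(3) U123(1) _ x0 x1, of "-1"] by (simp add: ens_def)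
  next
    assume "i = 2" then show ?thesis using ens_gen[OF d3(3) d3(4) d3(5) U123(2) _ x0 x1, of 1] by (simp add: ens_def)
  next
    assume "i = 3" then show ?thesis using ens_gen[OF d3(3) d3(4) d3(5) U123(2) _ x0 x1, of "-1"] by (simp add: ens_def)
  next
    assume "i = 4" then show ?thesis using ens_gen[OF d3(5) d3(6) d3(1) U123(3) _ x0 x1, of 1] by (simp add: ens_def)
  next
    assume "i = 5" then show ?thesis using ens_gen[OF d3(5) d3(6) d3(1) U123(3) _ x0 x1, of "-1"] by (simp add: ens_def)
  qed
qed

lemma pair_sum:
  assumes "p \<noteq> q"
  shows "proj (psi p q 1) + proj (psi p q (-1)) = (\<chi> i j. if i = j \<and> (i = p \<or> i = q) then 1 else 0)"
  using assms by (auto simp: vec_eq_iff proj_def psi_def field_simps sq2)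

lemma ens_avg: "(\<Sum>i<6. (1/6::real) *\<^sub>R ens i) = (1/3::real) *\<^sub>R mat 1"
proof -
  have "(\<Sum>i<6. (1/6::real) *\<^sub>R ens i) = (1/6::real) *\<^sub>R
      ((proj (psi 1 2 1) + proj (psi 1 2 (-1))) + (proj (psi 2 3 1) + proj (psi 2 3 (-1)))
       + (proj (psi 3 1 1) + proj (psi 3 1 (-1))))"
    by (simp add: eval_nat_numeral ens_def scaleR_add_right algebra_simps)
  also have "\<dots> = (1/3::real) *\<^sub>R mat 1"
    unfolding pair_sum[of 1 2, simplified] pair_sum[of 2 3, simplified] pair_sum[of 3 1, simplified]
  proof -
    have "\<And>i j::3. ((\<chi> i j. if i = j \<and> (i = 1 \<or> i = 2) then 1 else 0) +
          (\<chi> i j. if i = j \<and> (i = 2 \<or> i = 3) then 1 else 0) +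
          (\<chi> i j. if i = j \<and> (i = 3 \<or> i = 1) then 1 else 0) :: cmat3) $ i $ j = (2 * mat 1 :: cmat3) $ i $ j"
      subgoal for i j using exhaust_3[of i] exhaust_3[of j] by (auto simp: mat_def)
      done
    then show "(1/6::real) *\<^sub>R ((\<chi> i j. if i = j \<and> (i = 1 \<or> i = 2) then 1 else 0) +
          (\<chi> i j. if i = j \<and> (i = 2 \<or> i = 3) then 1 else 0) +
          (\<chi> i j. if i = j \<and> (i = 3 \<or> i = 1) then 1 else 0) :: cmat3) = (1/3::real) *\<^sub>R mat 1"
      by (simp add: vec_eq_iff mat_def sc_complex)
  qed
  finally show ?thesis .
qed

lemma trace_chi: "trace (\<chi> i j. if i = j then c else 0 :: cmat3) = 3 * c"
  by (simp add: trace_def sum_3)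

lemma Lambda_third: "Lambda x ((1/3::real) *\<^sub>R mat 1) = (1/3::real) *\<^sub>R mat 1"
  by (simp add: vec_eq_iff Lambda_entry trace_scaleR trace_mat3 trace_chi mat_def sc_complex algebra_simps) (simp add: field_simps)

lemma entropy_third: "vn_entropy ((1/3::real) *\<^sub>R (mat 1 :: cmat3)) = log 2 3"
proof -
  define A :: cmat3 where "A = (1/3::real) *\<^sub>R mat 1"
  have h: "cadj A = A" by (simp add: A_def cadj_scaleR cadj_mat)
  obtain U l where u: "unitary_mat U" and AU: "A = U ** diag_mat l ** cadj U"
    and S: "vn_entropy A = - (\<Sum>i\<in>UNIV. eta (l $ i))"
    using vn_entropy_ex[OF h] by blast
  have lk: "l$k = 1/3" for k
  proof -
    have "l$k = Re (cinner (ucol U k) (A *v ucol U k))" by (rule decomp_l(1)[OF u AU])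
    also have "\<dots> = 1/3 * Re (cinner (ucol U k) (ucol U k))"
      by (simp add: A_def mv_scaleR mv_mat cinner_smult_right)
    also have "cinner (ucol U k) (ucol U k) = 1" by (rule decomp_eig(2)[OF u AU])
    finally show ?thesis by simp
  qed
  have "vn_entropy A = - (eta (l$1) + eta (l$2) + eta (l$3))" by (simp add: S sum_3)
  also have "\<dots> = - (3 * eta (1/3))" unfolding lk by simp
  also have "\<dots> = log 2 3" by (simp add: eta_eq log_def ln_div)
  finally show ?thesis by (simp add: A_def)
qed

lemma vec_target: "(vector [\<i> / sqrt 2, 1 / sqrt 2, 0] :: complex^3) = psi 1 2 1"
proof -
  have "(vector [\<i> / sqrt 2, 1 / sqrt 2, 0] :: complex^3) $ j = psi 1 2 1 $ j" for j
    using exhaust_3[of j] by (auto simp: psi_def)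
  then show ?thesis by (simp add: vec_eq_iff)
qed

theorem mainTheorem1:
  fixes x :: real
  assumes "0 \<le> x" and "x \<le> 1"
  shows "is_max (holevo_quantities (Lambda x))
           (log 2 3 + x / 2 * log 2 (x / 2) + (1 - x / 2) * log 2 (1 - x / 2))
       \<and> is_min {vn_entropy (Lambda x \<rho>) | \<rho>. density \<rho>}
           (- (x / 2) * log 2 (x / 2) - (1 - x / 2) * log 2 (1 - x / 2))
       \<and> density (proj (vector [\<i> / sqrt 2, 1 / sqrt 2, 0] :: complex^3))
       \<and> vn_entropy (Lambda x (proj (vector [\<i> / sqrt 2, 1 / sqrt 2, 0] :: complex^3)))
           = - (x / 2) * log 2 (x / 2) - (1 - x / 2) * log 2 (1 - x / 2)"
proof -
  note x0 = assms(1) and x1 = assms(2)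
  have hb: "- (x / 2) * log 2 (x / 2) - (1 - x / 2) * log 2 (1 - x / 2) = hbin x"
    by (simp add: hbin_def)
  have cap: "log 2 3 + x / 2 * log 2 (x / 2) + (1 - x / 2) * log 2 (1 - x / 2) = log 2 3 - hbin x"
    by (simp add: hbin_def)
  have U: "(UNIV::3 set) = {1, 2, 3}" by (rule U123(1))
  have dv: "density (proj (vector [\<i> / sqrt 2, 1 / sqrt 2, 0] :: complex^3))"
    unfolding vec_target by (rule proj_density[OF psi_norm[OF _ _ _ U]]) simp_all
  have ev: "vn_entropy (Lambda x (proj (vector [\<i> / sqrt 2, 1 / sqrt 2, 0] :: complex^3))) = hbin x"
    unfolding vec_target by (rule entropy_psi[OF _ _ _ U _ x0 x1]) simp_all
  have mn: "is_min {vn_entropy (Lambda x \<rho>) | \<rho>. density \<rho>} (hbin x)"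
    unfolding is_min_def
  proof
    show "hbin x \<in> {vn_entropy (Lambda x \<rho>) | \<rho>. density \<rho>}" using dv ev by force
    show "\<forall>y\<in>{vn_entropy (Lambda x \<rho>) | \<rho>. density \<rho>}. hbin x \<le> y"
      using entropy_Lambda_lower[OF _ x0 x1] by blast
  qed
  have mem: "log 2 3 - hbin x \<in> holevo_quantities (Lambda x)"
  proof -
    have c: "\<forall>i<6. (1/6::real) \<ge> 0 \<and> density (ens i)" using ens_props[OF _ x0 x1] by simp
    have ps: "(\<Sum>i<(6::nat). (1/6::real)) = 1" by simp
    have "(\<Sum>i<6. (1/6::real) *\<^sub>R Lambda x (ens i)) = Lambda x (\<Sum>i<6. (1/6::real) *\<^sub>R ens i)"
      by (simp add: Lambda_sum Lambda_scale)
    also have "\<dots> = (1/3::real) *\<^sub>R mat 1" by (simp add: ens_avg Lambda_third)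
    finally have "vn_entropy (\<Sum>i<6. (1/6::real) *\<^sub>R Lambda x (ens i)) = log 2 3"
      by (simp add: entropy_third)
    moreover have "(\<Sum>i<6. (1/6::real) * vn_entropy (Lambda x (ens i))) = hbin x"
      using ens_props[OF _ x0 x1] by simp
    ultimately have val: "vn_entropy (\<Sum>i<6. (1/6::real) *\<^sub>R Lambda x (ens i))
        - (\<Sum>i<6. (1/6::real) * vn_entropy (Lambda x (ens i))) = log 2 3 - hbin x" by simp
    show ?thesis unfolding holevo_quantities_def mem_Collect_eq
      by (rule exI[of _ 6], rule exI[of _ "\<lambda>_. 1/6"], rule exI[of _ ens]) (use val c ps in simp)
  qed
  have mx: "is_max (holevo_quantities (Lambda x)) (log 2 3 - hbin x)"
    unfolding is_max_def using mem holevo_upper[OF x0 x1]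
    by (auto simp: holevo_quantities_def)
  show ?thesis unfolding cap hb using mx mn dv ev by simp
qed

end
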